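(* Let $X$ be a vector lattice and let $l : X \to \mathbb{R}$ be an order bounded linear functional. Then $\ker(l)$ is a Grothendieck subspace of $X$ if and only if $\ker(|l|)$ is a Grothendieck subspace of $X$, where $|l|$ is the modulus of $l$.
   Context: The modulus of an order bounded functional $l$ is $|l| = l \vee (-l)$ in the Riesz space of order bounded functionals. A linear subspace $H$ of a vector lattice is called a Grothendieck subspace (or $G$-space) if for all $x, y \in H$ one has $x \vee y \vee 0 + x \wedge y \wedge 0 \in H$. *)

theory Defs
  imports Main "HOL-Analysis.Analysis"
begin

class vector_lattice = ordered_real_vector + lattice

definition order_bounded_functional :: "('a::vector_lattice \<Rightarrow> real) \<Rightarrow> bool" where
  "order_bounded_functional l \<longleftrightarrow> linear l \<and>
     (\<forall>a b. a \<le> b \<longrightarrow> bdd_above (l ` {a..b}) \<and> bdd_below (l ` {a..b}))"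

definition functional_le :: "('a::vector_lattice \<Rightarrow> real) \<Rightarrow> ('a \<Rightarrow> real) \<Rightarrow> bool" where
  "functional_le f g \<longleftrightarrow> (\<forall>x. 0 \<le> x \<longrightarrow> f x \<le> g x)"

definition functional_modulus :: "('a::vector_lattice \<Rightarrow> real) \<Rightarrow> ('a \<Rightarrow> real)" where
  "functional_modulus l = (THE m. order_bounded_functional m \<and>
       functional_le l m \<and> functional_le (\<lambda>x. - l x) m \<and>
       (\<forall>g. order_bounded_functional g \<and> functional_le l g \<and> functional_le (\<lambda>x. - l x) g
            \<longrightarrow> functional_le m g))"

definition kernel :: "('a \<Rightarrow> real) \<Rightarrow> 'a set" where
  "kernel l = {x. l x = 0}"

definition grothendieck_subspace :: "'a::vector_lattice set \<Rightarrow> bool" where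
  "grothendieck_subspace H \<longleftrightarrow> subspace H \<and>
     (\<forall>x\<in>H. \<forall>y\<in>H. sup (sup x y) 0 + inf (inf x y) 0 \<in> H)"

end

theory Submission
  imports Defs "HOL-Library.Lattice_Algebras"
begin


subclass (in vector_lattice) lattice_ab_group_add ..

lemma lin_add: "linear f \<Longrightarrow> f (x + y) = f x + (f y::real)"
  by (simp add: linear_iff)
lemma lin_scale: "linear f \<Longrightarrow> f (c *\<^sub>R x) = c * (f x::real)"
  by (simp add: linear_iff)
lemma lin_diff: "linear f \<Longrightarrow> f (x - y) = f x - (f y::real)"
  by (rule linear_diff)
lemma lin_0: "linear f \<Longrightarrow> f 0 = (0::real)"
  by (rule linear_0)
lemma lin_neg: "linear f \<Longrightarrow> f (- x) = - (f x::real)"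
  by (rule linear_neg)


lemma sup_via_pos: "sup a b = b + sup (a - b) (0::'a::vector_lattice)"
  by (simp add: add_sup_distrib_left)

lemma inf_via_pos: "inf a b = a - sup (a - b) (0::'a::vector_lattice)"
proof -
  have "a - sup (a - b) 0 = a + inf (b - a) 0"
    by (simp add: diff_sup_eq_inf)
  also have "\<dots> = inf b a" by (simp add: add_inf_distrib_left)
  finally show ?thesis by (simp add: inf_commute)
qed

lemma inf_zero_neg: "inf z 0 = - sup (- z) (0::'a::vector_lattice)"
  using inf_eq_neg_sup[of z 0] by (simp only: minus_zero)

lemma pos_neg_decomp: "z = sup z 0 - sup (- z) (0::'a::vector_lattice)"
proof -
  have "z + 0 = sup z 0 + inf z 0" by (rule add_eq_inf_sup)
  thus ?thesis by (simp only: inf_zero_neg add_0_right diff_conv_add_uminus)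
qed

lemma pos_neg_disj: "inf (sup z 0) (sup (- z) (0::'a::vector_lattice)) = 0"
proof -
  let ?B = "sup (- z) (0::'a)"
  have e: "sup z 0 = z + ?B"
  proof -
    have "sup z 0 = (sup z 0 - ?B) + ?B" by (rule diff_add_cancel[symmetric])
    also have "sup z 0 - ?B = z" by (rule pos_neg_decomp[symmetric])
    finally show ?thesis .
  qed
  have "inf (sup z 0) ?B = inf (z + ?B) (0 + ?B)" by (simp only: e add_0_left)
  also have "\<dots> = inf z 0 + ?B" by (rule add_inf_distrib_right[symmetric])
  also have "\<dots> = 0" by (simp only: inf_zero_neg add.left_inverse)
  finally show ?thesis .
qed

lemma PN_pos: fixes P N :: "'a::vector_lattice"
  assumes "inf P N = 0" shows "sup (P - N) 0 = P"
proof -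
  have "sup (P - N) 0 = sup (P + - N) (P + - P)" by simp
  also have "\<dots> = P + sup (- N) (- P)" by (rule add_sup_distrib_left[symmetric])
  also have "sup (- N) (- P) = - inf N P" by (rule neg_inf_eq_sup[symmetric])
  also have "inf N P = 0" using assms by (simp only: inf_commute)
  finally show ?thesis by simp
qed

lemma inf_subadd: fixes a b c :: "'a::vector_lattice"
  assumes "0 \<le> a" "0 \<le> b" "0 \<le> c"
  shows "inf (a + b) c \<le> inf a c + inf b c"
proof -
  have "inf a c + inf b c = inf (inf (a + b) (a + c)) (inf (c + b) (c + c))"
    by (simp add: add_inf_distrib_left add_inf_distrib_right add.commute inf_commute inf_left_commute)
  moreover have "inf (a + b) c \<le> a + c" using assms
    by (intro order.trans[OF inf.cobounded2] add_increasing) auto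
  moreover have "inf (a + b) c \<le> c + b" using assms
    by (intro order.trans[OF inf.cobounded2] add_increasing2) auto
  moreover have "inf (a + b) c \<le> c + c" using assms
    by (intro order.trans[OF inf.cobounded2] add_increasing) auto
  ultimately show ?thesis by simp
qed

lemma scale_inf: fixes u v :: "'a::vector_lattice"
  assumes "0 \<le> c" shows "c *\<^sub>R inf u v = inf (c *\<^sub>R u) (c *\<^sub>R v)"
proof (cases "c = 0")
  case True then show ?thesis by simp
next
  case False
  hence c: "c > 0" using assms by simp
  have 1: "c *\<^sub>R inf u v \<le> inf (c *\<^sub>R u) (c *\<^sub>R v)"
    using assms by (simp add: scaleR_left_mono)
  have "(1/c) *\<^sub>R inf (c *\<^sub>R u) (c *\<^sub>R v) \<le> inf u v"
  proof -
    have "(1/c) *\<^sub>R inf (c *\<^sub>R u) (c *\<^sub>R v) \<le> (1/c) *\<^sub>R (c *\<^sub>R u)"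
      using c by (intro scaleR_left_mono) auto
    moreover have "(1/c) *\<^sub>R inf (c *\<^sub>R u) (c *\<^sub>R v) \<le> (1/c) *\<^sub>R (c *\<^sub>R v)"
      using c by (intro scaleR_left_mono) auto
    ultimately show ?thesis using c by simp
  qed
  hence "c *\<^sub>R ((1/c) *\<^sub>R inf (c *\<^sub>R u) (c *\<^sub>R v)) \<le> c *\<^sub>R inf u v"
    using c by (intro scaleR_left_mono) auto
  hence "inf (c *\<^sub>R u) (c *\<^sub>R v) \<le> c *\<^sub>R inf u v" using c by simp
  with 1 show ?thesis by (rule order.antisym)
qed

lemma scale_sup: fixes u v :: "'a::vector_lattice"
  assumes "0 \<le> c" shows "c *\<^sub>R sup u v = sup (c *\<^sub>R u) (c *\<^sub>R v)"
proof -
  have "c *\<^sub>R sup u v = c *\<^sub>R (- inf (-u) (-v))"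
    by (subst sup_eq_neg_inf) (rule refl)
  also have "\<dots> = - (c *\<^sub>R inf (-u) (-v))" by (rule scaleR_minus_right)
  also have "c *\<^sub>R inf (-u) (-v) = inf (c *\<^sub>R (-u)) (c *\<^sub>R (-v))" by (rule scale_inf[OF assms])
  also have "\<dots> = inf (- (c *\<^sub>R u)) (- (c *\<^sub>R v))" by (simp only: scaleR_minus_right)
  also have "- \<dots> = sup (- (- (c *\<^sub>R u))) (- (- (c *\<^sub>R v)))" by (rule neg_inf_eq_sup)
  also have "\<dots> = sup (c *\<^sub>R u) (c *\<^sub>R v)" by (simp only: minus_minus)
  finally show ?thesis .
qed

lemma scale_pos: fixes z :: "'a::vector_lattice"
  assumes "0 \<le> c" shows "sup (c *\<^sub>R z) 0 = c *\<^sub>R sup z 0"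
  using scale_sup[OF assms, of z 0] by simp

lemma disj_mono: fixes u v u' v' :: "'a::vector_lattice"
  assumes "inf u' v' = 0" "0 \<le> u" "u \<le> u'" "0 \<le> v" "v \<le> v'"
  shows "inf u v = 0"
proof -
  have "inf u v \<le> inf u' v'" using assms by (meson inf_mono)
  moreover have "0 \<le> inf u v" using assms by simp
  ultimately show ?thesis using assms(1) by simp
qed

lemma scale_disj: fixes p q :: "'a::vector_lattice"
  assumes "inf p q = 0" "0 \<le> p" "0 \<le> q" "0 \<le> c" "0 \<le> d"
  shows "inf (c *\<^sub>R p) (d *\<^sub>R q) = 0"
proof -
  define e where "e = max c d"
  have e0: "0 \<le> e" using assms unfolding e_def by simp
  have "inf (e *\<^sub>R p) (e *\<^sub>R q) = e *\<^sub>R inf p q" by (rule scale_inf[OF e0, symmetric])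
  also have "\<dots> = 0" using assms(1) by simp
  finally have 1: "inf (e *\<^sub>R p) (e *\<^sub>R q) = 0" .
  have 2: "c *\<^sub>R p \<le> e *\<^sub>R p" using assms unfolding e_def by (intro scaleR_right_mono) auto
  have 3: "d *\<^sub>R q \<le> e *\<^sub>R q" using assms unfolding e_def by (intro scaleR_right_mono) auto
  have 4: "0 \<le> c *\<^sub>R p" "0 \<le> d *\<^sub>R q" using assms by (simp_all add: scaleR_nonneg_nonneg)
  show ?thesis by (rule disj_mono[OF 1 4(1) 2 4(2) 3])
qed

lemma inf_disj_add: fixes z u v :: "'a::vector_lattice"
  assumes "0 \<le> z" "0 \<le> u" "0 \<le> v" "inf u v = 0"
  shows "inf z (u + v) = inf z u + inf z v"
proof (rule order.antisym)
  have "inf (u + v) z \<le> inf u z + inf v z" by (rule inf_subadd[OF assms(2,3,1)])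
  then show "inf z (u + v) \<le> inf z u + inf z v" by (simp only: inf_commute)
  have z1: "0 \<le> inf z u" using assms by simp
  have z2: "0 \<le> inf z v" using assms by simp
  have d: "inf (inf z u) (inf z v) = 0"
    by (rule disj_mono[OF assms(4) z1 inf.cobounded2 z2 inf.cobounded2])
  have "inf z u + inf z v = sup (inf z u) (inf z v) + inf (inf z u) (inf z v)"
    by (rule add_eq_inf_sup)
  also have "\<dots> = sup (inf z u) (inf z v)" by (simp only: d add_0_right)
  also have "\<dots> \<le> z" by (rule sup_least) simp_all
  finally have 1: "inf z u + inf z v \<le> z" .
  have 2: "inf z u + inf z v \<le> u + v" by (rule add_mono) simp_all
  show "inf z u + inf z v \<le> inf z (u + v)" by (rule le_infI[OF 1 2])
qed

lemma trunc_rest: "z = inf z w + sup (z - w) (0::'a::vector_lattice)"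
proof -
  have "inf z w + sup (z - w) 0 = z" by (subst inf_via_pos) (rule diff_add_cancel)
  thus ?thesis by (rule sym)
qed

lemma pos_le: fixes z P N :: "'a::vector_lattice"
  assumes "z = P - N" "0 \<le> P" "0 \<le> N" shows "sup z 0 \<le> P"
proof (rule sup_least)
  show "z \<le> P" using assms(1,3) by simp
  show "0 \<le> P" by fact
qed

lemma disj_far: fixes a b z :: "'a::vector_lattice"
  assumes "a \<le> b" shows "inf (sup (a - z) 0) (sup (z - b) 0) = 0"
proof -
  have 1: "sup (a - z) 0 \<le> sup (b - z) 0"
    by (rule sup_mono[OF diff_right_mono[OF assms] order.refl])
  have 2: "sup (z - b) 0 = sup (- (b - z)) 0" by (simp only: minus_diff_eq)
  have "inf (sup (a - z) 0) (sup (z - b) 0) \<le> inf (sup (b - z) 0) (sup (- (b - z)) 0)"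
    unfolding 2 by (rule inf_mono[OF 1 order.refl])
  also have "\<dots> = 0" by (rule pos_neg_disj)
  finally have "inf (sup (a - z) 0) (sup (z - b) 0) \<le> 0" .
  moreover have "0 \<le> inf (sup (a - z) 0) (sup (z - b) (0::'a))" by simp
  ultimately show ?thesis by (rule order.antisym)
qed



lemma grp1: "(A::'b::ab_group_add) - B = P - N \<Longrightarrow> A + N = P + B"
  by (simp add: algebra_simps)
lemma grp2: "(a::'b::ab_group_add) = ap - an \<Longrightarrow> b = bp - bn \<Longrightarrow> a + b = (ap + bp) - (an + bn)"
  by (simp add: algebra_simps)

section \<open>Linear extension from the positive cone\<close>

definition cext :: "('a::vector_lattice \<Rightarrow> real) \<Rightarrow> 'a \<Rightarrow> real" where
  "cext \<phi> z = \<phi> (sup z 0) - \<phi> (sup (- z) 0)"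

lemma cext_repr:
  fixes \<phi> :: "'a::vector_lattice \<Rightarrow> real"
  assumes add: "\<And>x y. 0 \<le> x \<Longrightarrow> 0 \<le> y \<Longrightarrow> \<phi> (x + y) = \<phi> x + \<phi> y"
    and z: "z = P - N" "0 \<le> P" "0 \<le> N"
  shows "cext \<phi> z = \<phi> P - \<phi> N"
proof -
  have d: "z = sup z 0 - sup (- z) 0" by (rule pos_neg_decomp)
  have "sup z 0 + N = P + sup (- z) 0"
    by (rule grp1) (metis d z(1))
  hence "\<phi> (sup z 0 + N) = \<phi> (P + sup (- z) 0)" by simp
  hence "\<phi> (sup z 0) + \<phi> N = \<phi> P + \<phi> (sup (- z) 0)"
    using add[of "sup z 0" N] add[of P "sup (- z) 0"] z by simp
  thus ?thesis unfolding cext_def by simp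
qed

lemma cext_pos:
  fixes \<phi> :: "'a::vector_lattice \<Rightarrow> real"
  assumes add: "\<And>x y. 0 \<le> x \<Longrightarrow> 0 \<le> y \<Longrightarrow> \<phi> (x + y) = \<phi> x + \<phi> y"
    and "0 \<le> z"
  shows "cext \<phi> z = \<phi> z"
proof -
  have "\<phi> 0 = 0" using add[of 0 0] by simp
  thus ?thesis using cext_repr[OF add, of z z 0] assms by simp
qed

lemma cext_linear:
  fixes \<phi> :: "'a::vector_lattice \<Rightarrow> real"
  assumes add: "\<And>x y. 0 \<le> x \<Longrightarrow> 0 \<le> y \<Longrightarrow> \<phi> (x + y) = \<phi> x + \<phi> y"
    and hom: "\<And>c x. 0 \<le> c \<Longrightarrow> 0 \<le> x \<Longrightarrow> \<phi> (c *\<^sub>R x) = c * \<phi> x"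
  shows "linear (cext \<phi>)"
proof (rule linearI)
  fix a b :: 'a
  let ?ap = "sup a 0" and ?an = "sup (- a) 0" and ?bp = "sup b 0" and ?bn = "sup (- b) 0"
  have da: "a = ?ap - ?an" and db: "b = ?bp - ?bn" by (rule pos_neg_decomp)+
  have "a + b = (?ap + ?bp) - (?an + ?bn)" by (rule grp2[OF da db])
  hence "cext \<phi> (a + b) = \<phi> (?ap + ?bp) - \<phi> (?an + ?bn)"
    by (intro cext_repr[OF add]) (auto intro: add_nonneg_nonneg)
  also have "\<dots> = (\<phi> ?ap - \<phi> ?an) + (\<phi> ?bp - \<phi> ?bn)" using add by simp
  finally show "cext \<phi> (a + b) = cext \<phi> a + cext \<phi> b" unfolding cext_def by simp
next
  fix r :: real and b :: 'a
  let ?bp = "sup b 0" and ?bn = "sup (- b) 0"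
  have db: "b = ?bp - ?bn" by (rule pos_neg_decomp)
  show "cext \<phi> (r *\<^sub>R b) = r *\<^sub>R cext \<phi> b"
  proof (cases "0 \<le> r")
    case True
    have "r *\<^sub>R b = r *\<^sub>R ?bp - r *\<^sub>R ?bn" using db by (metis scaleR_diff_right)
    hence "cext \<phi> (r *\<^sub>R b) = \<phi> (r *\<^sub>R ?bp) - \<phi> (r *\<^sub>R ?bn)"
      using True by (intro cext_repr[OF add]) (auto intro: scaleR_nonneg_nonneg)
    also have "\<dots> = r * (\<phi> ?bp - \<phi> ?bn)" using hom True by (simp add: algebra_simps)
    finally show ?thesis unfolding cext_def by simp
  next
    case False
    have "r *\<^sub>R b = (- r) *\<^sub>R ?bn - (- r) *\<^sub>R ?bp" using db
      by (metis minus_diff_eq scaleR_diff_right scaleR_minus_left scaleR_minus_right)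
    hence "cext \<phi> (r *\<^sub>R b) = \<phi> ((- r) *\<^sub>R ?bn) - \<phi> ((- r) *\<^sub>R ?bp)"
      using False by (intro cext_repr[OF add]) (auto intro: scaleR_nonneg_nonneg simp del: scaleR_minus_left)
    also have "\<dots> = (- r) * \<phi> ?bn - (- r) * \<phi> ?bp"
      using hom[of "- r" ?bn] hom[of "- r" ?bp] False by simp
    also have "\<dots> = r * (\<phi> ?bp - \<phi> ?bn)" by (simp add: algebra_simps)
    finally show ?thesis unfolding cext_def by simp
  qed
qed

lemma lin_eq_cone:
  fixes f g :: "'a::vector_lattice \<Rightarrow> real"
  assumes "linear f" "linear g" "\<And>x. 0 \<le> x \<Longrightarrow> f x = g x"
  shows "f z = g z"
proof -
  have "f z = f (sup z 0 - sup (- z) 0)" using pos_neg_decomp[of z] by simp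
  also have "\<dots> = f (sup z 0) - f (sup (- z) 0)" by (rule lin_diff[OF assms(1)])
  also have "\<dots> = g (sup z 0) - g (sup (- z) 0)" using assms(3) by simp
  also have "\<dots> = g (sup z 0 - sup (- z) 0)" by (rule lin_diff[OF assms(2), symmetric])
  also have "\<dots> = g z" using pos_neg_decomp[of z] by simp
  finally show ?thesis .
qed



section \<open>Riesz--Kantorovich construction of the modulus\<close>

definition MP :: "('a::vector_lattice \<Rightarrow> real) \<Rightarrow> 'a \<Rightarrow> real" where
  "MP l x = Sup ((\<lambda>v. l v - l (x - v)) ` {0..x})"

lemma MP_bdd:
  fixes l :: "'a::vector_lattice \<Rightarrow> real"
  assumes ob: "order_bounded_functional l" and x: "0 \<le> x"
  shows "bdd_above ((\<lambda>v. l v - l (x - v)) ` {0..x})"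
proof -
  from ob x have ba: "bdd_above (l ` {0..x})" and bb: "bdd_below (l ` {0..x})"
    unfolding order_bounded_functional_def by auto
  obtain U where U0: "\<forall>y\<in>l ` {0..x}. y \<le> U" using ba unfolding bdd_above_def by blast
  obtain L where L0: "\<forall>y\<in>l ` {0..x}. L \<le> y" using bb unfolding bdd_below_def by blast
  have U: "\<And>v. v \<in> {0..x} \<Longrightarrow> l v \<le> U" using U0 by blast
  have L: "\<And>v. v \<in> {0..x} \<Longrightarrow> L \<le> l v" using L0 by blast
  have "\<And>v. v \<in> {0..x} \<Longrightarrow> l v - l (x - v) \<le> U - L"
  proof -
    fix v assume v: "v \<in> {0..x}"
    hence "x - v \<in> {0..x}" using x by auto
    thus "l v - l (x - v) \<le> U - L" using U[OF v] L by (meson diff_mono)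
  qed
  thus ?thesis unfolding bdd_above_def by (intro exI[of _ "U - L"]) auto
qed

lemma MP_ge:
  fixes l :: "'a::vector_lattice \<Rightarrow> real"
  assumes ob: "order_bounded_functional l" and "0 \<le> v" "v \<le> x"
  shows "l v - l (x - v) \<le> MP l x"
  unfolding MP_def using assms MP_bdd[OF ob, of x]
  by (intro cSup_upper) auto

lemma MP_le:
  fixes l :: "'a::vector_lattice \<Rightarrow> real"
  assumes "0 \<le> x" "\<And>v. 0 \<le> v \<Longrightarrow> v \<le> x \<Longrightarrow> l v - l (x - v) \<le> c"
  shows "MP l x \<le> c"
  unfolding MP_def using assms by (intro cSup_least) auto

lemma MP_add:
  fixes l :: "'a::vector_lattice \<Rightarrow> real"
  assumes ob: "order_bounded_functional l" and x: "0 \<le> x" and y: "0 \<le> y"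
  shows "MP l (x + y) = MP l x + MP l y"
proof -
  have lin: "linear l" using ob unfolding order_bounded_functional_def by simp
  have xy: "0 \<le> x + y" using x y by simp
  show ?thesis
  proof (rule order.antisym)
    show "MP l (x + y) \<le> MP l x + MP l y"
    proof (rule MP_le[OF xy])
      fix u assume u: "0 \<le> u" "u \<le> x + y"
      define u1 where "u1 = inf u x"
      define u2 where "u2 = sup (u - x) 0"
      have uu: "u = u1 + u2" unfolding u1_def u2_def by (rule trunc_rest)
      have u1: "0 \<le> u1" "u1 \<le> x" unfolding u1_def using u x by auto
      have u2: "0 \<le> u2" "u2 \<le> y" unfolding u2_def using u y by (auto simp: diff_le_eq add.commute)
      have "x + y - u = (x - u1) + (y - u2)" using uu by (simp add: algebra_simps)
      hence "l u - l (x + y - u) = (l u1 - l (x - u1)) + (l u2 - l (y - u2))"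
        using uu lin by (simp add: lin_add lin_diff)
      also have "\<dots> \<le> MP l x + MP l y"
        by (intro add_mono MP_ge[OF ob] u1 u2)
      finally show "l u - l (x + y - u) \<le> MP l x + MP l y" .
    qed
  next
    have "MP l x \<le> MP l (x + y) - MP l y"
    proof (rule MP_le[OF x])
      fix v assume v: "0 \<le> v" "v \<le> x"
      have "MP l y \<le> MP l (x + y) - (l v - l (x - v))"
      proof (rule MP_le[OF y])
        fix w assume w: "0 \<le> w" "w \<le> y"
        have "l (v + w) - l (x + y - (v + w)) \<le> MP l (x + y)"
          using v w by (intro MP_ge[OF ob]) (auto intro: add_mono add_nonneg_nonneg)
        moreover have "l (v + w) - l (x + y - (v + w)) = (l v - l (x - v)) + (l w - l (y - w))"
        proof -
          have e: "x + y - (v + w) = (x - v) + (y - w)" by (simp add: algebra_simps)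
          have "l (x + y - (v + w)) = l (x - v) + l (y - w)" unfolding e by (rule lin_add[OF lin])
          moreover have "l (v + w) = l v + l w" by (rule lin_add[OF lin])
          ultimately show ?thesis by simp
        qed
        ultimately show "l w - l (y - w) \<le> MP l (x + y) - (l v - l (x - v))" by simp
      qed
      thus "l v - l (x - v) \<le> MP l (x + y) - MP l y" by simp
    qed
    thus "MP l x + MP l y \<le> MP l (x + y)" by simp
  qed
qed

lemma MP_hom_le:
  fixes l :: "'a::vector_lattice \<Rightarrow> real"
  assumes ob: "order_bounded_functional l" and c: "0 < c" and x: "0 \<le> x"
  shows "MP l (c *\<^sub>R x) \<le> c * MP l x"
proof (rule MP_le)
  have lin: "linear l" using ob unfolding order_bounded_functional_def by simp
  show "0 \<le> c *\<^sub>R x" using c x by (simp add: scaleR_nonneg_nonneg)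
  fix v assume v: "0 \<le> v" "v \<le> c *\<^sub>R x"
  define v' where "v' = (1/c) *\<^sub>R v"
  have vv: "v = c *\<^sub>R v'" unfolding v'_def using c by simp
  have v'0: "0 \<le> v'" unfolding v'_def using c v by (simp add: scaleR_nonneg_nonneg)
  have "(1/c) *\<^sub>R v \<le> (1/c) *\<^sub>R (c *\<^sub>R x)" using c v by (intro scaleR_left_mono) auto
  hence v'x: "v' \<le> x" unfolding v'_def using c by simp
  have "l v - l (c *\<^sub>R x - v) = c * (l v' - l (x - v'))"
    unfolding vv using lin by (simp add: lin_scale lin_diff algebra_simps flip: scaleR_diff_right)
  also have "\<dots> \<le> c * MP l x" using c by (intro mult_left_mono MP_ge[OF ob v'0 v'x]) auto
  finally show "l v - l (c *\<^sub>R x - v) \<le> c * MP l x" .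
qed

lemma MP_hom:
  fixes l :: "'a::vector_lattice \<Rightarrow> real"
  assumes ob: "order_bounded_functional l" and c: "0 \<le> c" and x: "0 \<le> x"
  shows "MP l (c *\<^sub>R x) = c * MP l x"
proof (cases "c = 0")
  case True
  have "MP l 0 = 0"
  proof (rule order.antisym)
    show "MP l 0 \<le> 0" by (rule MP_le) (auto dest: order.antisym)
    show "0 \<le> MP l 0" using MP_ge[OF ob, of 0 0] by simp
  qed
  thus ?thesis using True by simp
next
  case False
  hence c: "0 < c" using c by simp
  have 1: "MP l (c *\<^sub>R x) \<le> c * MP l x" by (rule MP_hom_le[OF ob c x])
  have "MP l ((1/c) *\<^sub>R (c *\<^sub>R x)) \<le> (1/c) * MP l (c *\<^sub>R x)"
    using c x by (intro MP_hom_le[OF ob]) (auto simp: scaleR_nonneg_nonneg)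
  hence "MP l x \<le> (1/c) * MP l (c *\<^sub>R x)" using c by simp
  hence "c * MP l x \<le> MP l (c *\<^sub>R x)" using c by (simp add: field_simps)
  with 1 show ?thesis by simp
qed

definition RKM :: "('a::vector_lattice \<Rightarrow> real) \<Rightarrow> 'a \<Rightarrow> real" where
  "RKM l = cext (MP l)"

lemma RKM_linear: "order_bounded_functional l \<Longrightarrow> linear (RKM l)"
  unfolding RKM_def by (intro cext_linear MP_add MP_hom) auto

lemma RKM_pos: "order_bounded_functional l \<Longrightarrow> 0 \<le> x \<Longrightarrow> RKM l x = MP l x"
  unfolding RKM_def by (intro cext_pos MP_add) auto

lemma RKM_ge:
  assumes ob: "order_bounded_functional l" and x: "0 \<le> x"
  shows "l x \<le> RKM l x" "- l x \<le> RKM l x"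
proof -
  have lin: "linear l" using ob unfolding order_bounded_functional_def by simp
  show "l x \<le> RKM l x" using MP_ge[OF ob x order.refl] RKM_pos[OF ob x] lin by (simp add: lin_0)
  show "- l x \<le> RKM l x" using MP_ge[OF ob order.refl x] RKM_pos[OF ob x] lin by (simp add: lin_0)
qed

lemma RKM_least:
  assumes ob: "order_bounded_functional l" and g: "linear g"
    and gl: "\<And>x. 0 \<le> x \<Longrightarrow> l x \<le> g x" and gl': "\<And>x. 0 \<le> x \<Longrightarrow> - l x \<le> g x"
    and x: "0 \<le> x"
  shows "RKM l x \<le> g x"
proof -
  have "MP l x \<le> g x"
  proof (rule MP_le[OF x])
    fix v assume v: "0 \<le> v" "v \<le> x"
    have "l v \<le> g v" using gl v by simp
    moreover have "- l (x - v) \<le> g (x - v)" using gl' v by simp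
    moreover have "g v + g (x - v) = g x" using g by (simp add: lin_diff)
    ultimately show "l v - l (x - v) \<le> g x" by linarith
  qed
  thus ?thesis using RKM_pos[OF ob x] by simp
qed

lemma RKM_nonneg:
  assumes ob: "order_bounded_functional l" and x: "0 \<le> x"
  shows "0 \<le> RKM l x"
  using RKM_ge[OF ob x] by linarith

lemma RKM_mono:
  assumes ob: "order_bounded_functional l" and "a \<le> b"
  shows "RKM l a \<le> RKM l b"
proof -
  have "0 \<le> RKM l (b - a)" using assms by (intro RKM_nonneg) auto
  thus ?thesis using RKM_linear[OF ob] by (simp add: lin_diff)
qed

lemma RKM_ob: assumes ob: "order_bounded_functional l" shows "order_bounded_functional (RKM l)"
  unfolding order_bounded_functional_def
proof (intro conjI allI impI)
  show "linear (RKM l)" by (rule RKM_linear[OF ob])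
  fix a b :: 'a assume "a \<le> b"
  show "bdd_above (RKM l ` {a..b})"
    unfolding bdd_above_def by (rule exI[of _ "RKM l b"]) (auto intro: RKM_mono[OF ob])
  show "bdd_below (RKM l ` {a..b})"
    unfolding bdd_below_def by (rule exI[of _ "RKM l a"]) (auto intro: RKM_mono[OF ob])
qed

lemma functional_modulus_eq:
  assumes ob: "order_bounded_functional l"
  shows "functional_modulus l = RKM l"
  unfolding functional_modulus_def
proof (rule the_equality)
  show "order_bounded_functional (RKM l) \<and> functional_le l (RKM l) \<and>
    functional_le (\<lambda>x. - l x) (RKM l) \<and>
    (\<forall>g. order_bounded_functional g \<and> functional_le l g \<and> functional_le (\<lambda>x. - l x) g \<longrightarrow>
         functional_le (RKM l) g)"
    unfolding functional_le_def
    using RKM_ob[OF ob] RKM_ge[OF ob] RKM_least[OF ob]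
    by (auto simp: order_bounded_functional_def)
next
  fix m assume m: "order_bounded_functional m \<and> functional_le l m \<and>
    functional_le (\<lambda>x. - l x) m \<and>
    (\<forall>g. order_bounded_functional g \<and> functional_le l g \<and> functional_le (\<lambda>x. - l x) g \<longrightarrow>
         functional_le m g)"
  have lm: "linear m" using m by (simp add: order_bounded_functional_def)
  have 1: "\<And>x. 0 \<le> x \<Longrightarrow> RKM l x \<le> m x"
    using m RKM_least[OF ob lm] unfolding functional_le_def by auto
  have 2: "\<And>x. 0 \<le> x \<Longrightarrow> m x \<le> RKM l x"
    using m RKM_ob[OF ob] RKM_ge[OF ob] unfolding functional_le_def by auto
  show "m = RKM l"
  proof
    fix z show "m z = RKM l z"
      using lin_eq_cone[OF lm RKM_linear[OF ob]] 1 2 by (meson order.antisym)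
  qed
qed

lemma RKM_witness:
  assumes ob: "order_bounded_functional l" and a: "0 \<le> a" and pos: "0 < RKM l a"
  shows "\<exists>v. 0 \<le> v \<and> v \<le> a \<and> l v \<noteq> 0"
proof (rule ccontr)
  assume "\<not> ?thesis"
  hence z: "\<And>v. 0 \<le> v \<Longrightarrow> v \<le> a \<Longrightarrow> l v = 0" by auto
  have "MP l a \<le> 0"
  proof (rule MP_le[OF a])
    fix v assume v: "0 \<le> v" "v \<le> a"
    have "l v = 0" using z v by simp
    moreover have "l (a - v) = 0" using z v by simp
    ultimately show "l v - l (a - v) \<le> 0" by simp
  qed
  thus False using pos RKM_pos[OF ob a] by simp
qed



definition G :: "'a::vector_lattice \<Rightarrow> 'a \<Rightarrow> 'a" where
  "G x y = sup (sup x y) 0 + inf (inf x y) 0"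

definition Gr :: "real \<Rightarrow> real \<Rightarrow> real" where
  "Gr a b = max (max a b) 0 + min (min a b) 0"

definition Cf :: "('a::vector_lattice \<Rightarrow> real) \<Rightarrow> bool" where
  "Cf f \<longleftrightarrow> (\<forall>x y. f x = 0 \<longrightarrow> f y = 0 \<longrightarrow> f (G x y) = 0)"

lemma gs_iff:
  fixes f :: "'a::vector_lattice \<Rightarrow> real"
  assumes lin: "linear f"
  shows "grothendieck_subspace (kernel f) \<longleftrightarrow> Cf f"
proof -
  have "subspace (kernel f)"
    unfolding subspace_def kernel_def using lin by (simp add: lin_add lin_scale lin_0)
  thus ?thesis unfolding grothendieck_subspace_def Cf_def kernel_def G_def by auto
qed

lemma Gr_hom: "Gr (t * a) (t * b) = t * Gr a b"
  unfolding Gr_def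
  by (cases "t \<ge> 0"; cases "a \<le> b"; cases "a \<le> 0"; cases "b \<le> 0")
     (auto simp: max_def min_def mult_le_cancel_left mult_le_cancel_right algebra_simps mult_le_0_iff zero_le_mult_iff)

lemma Gr_lin2:
  assumes "c1 * X1 + c2 * X2 = 0" "c1 * Y1 + c2 * Y2 = 0"
  shows "c1 * Gr X1 Y1 + c2 * Gr X2 Y2 = 0"
proof (cases "c2 = 0")
  case True
  show ?thesis
  proof (cases "c1 = 0")
    case True with \<open>c2 = 0\<close> show ?thesis by simp
  next
    case False
    with True assms have "X1 = 0" "Y1 = 0" by auto
    with True show ?thesis by (simp add: Gr_def)
  qed
next
  case False
  have e1: "X2 = (- c1 / c2) * X1" and e2: "Y2 = (- c1 / c2) * Y1" using assms False by (auto simp: field_simps)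
  have "Gr X2 Y2 = Gr ((- c1 / c2) * X1) ((- c1 / c2) * Y1)" by (simp only: e1 e2)
  also have "\<dots> = (- c1 / c2) * Gr X1 Y1" by (rule Gr_hom)
  finally have "Gr X2 Y2 = (- c1 / c2) * Gr X1 Y1" .
  thus ?thesis using False by (simp add: field_simps)
qed

lemma GL:
  fixes f :: "'a::vector_lattice \<Rightarrow> real"
  assumes l1: "linear \<phi>1" and l2: "linear \<phi>2"
    and p1: "\<And>z. \<phi>1 (sup z 0) = max (\<phi>1 z) 0" and p2: "\<And>z. \<phi>2 (sup z 0) = max (\<phi>2 z) 0"
    and f: "\<And>z. f z = c1 * \<phi>1 z + c2 * \<phi>2 z"
  shows "Cf f"
proof -
  have hom: "\<phi> (G x y) = Gr (\<phi> x) (\<phi> y)"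
    if l: "linear \<phi>" and p: "\<And>z. \<phi> (sup z 0) = max (\<phi> z) 0" for \<phi> :: "'a \<Rightarrow> real" and x y
  proof -
    have s: "\<phi> (sup a b) = max (\<phi> a) (\<phi> b)" for a b
    proof -
      have "\<phi> (sup a b) = \<phi> b + \<phi> (sup (a - b) 0)" by (subst sup_via_pos) (rule lin_add[OF l])
      also have "\<phi> (sup (a - b) 0) = max (\<phi> a - \<phi> b) 0" by (simp only: p lin_diff[OF l])
      finally show ?thesis by (simp add: max_def)
    qed
    have i: "\<phi> (inf a b) = min (\<phi> a) (\<phi> b)" for a b
    proof -
      have "\<phi> (inf a b) = \<phi> a - \<phi> (sup (a - b) 0)" by (subst inf_via_pos) (rule lin_diff[OF l])
      also have "\<phi> (sup (a - b) 0) = max (\<phi> a - \<phi> b) 0" by (simp only: p lin_diff[OF l])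
      finally show ?thesis by (simp add: max_def min_def)
    qed
    show ?thesis unfolding G_def Gr_def using l by (simp add: lin_add s i lin_0)
  qed
  show ?thesis unfolding Cf_def
  proof (intro allI impI)
    fix x y assume "f x = 0" "f y = 0"
    thus "f (G x y) = 0" unfolding f hom[OF l1 p1] hom[OF l2 p2] by (rule Gr_lin2)
  qed
qed



lemma dsum: fixes a b w :: "'a::vector_lattice"
  assumes "0 \<le> a" "0 \<le> b" "0 \<le> w" "inf a w = 0" "inf b w = 0"
  shows "inf (a + b) w = 0"
proof (rule order.antisym)
  have "inf (a + b) w \<le> inf a w + inf b w" by (rule inf_subadd[OF assms(1-3)])
  thus "inf (a + b) w \<le> 0" using assms(4,5) by simp
  show "0 \<le> inf (a + b) w" using assms by simp
qed

lemma dsum3: fixes A B1 B2 B3 :: "'a::vector_lattice"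
  assumes "0 \<le> A" "0 \<le> B1" "0 \<le> B2" "0 \<le> B3"
    and "inf B1 A = 0" "inf B2 A = 0" "inf B3 A = 0"
  shows "inf (B1 + B2 + B3) A = 0"
proof -
  have i: "inf (B1 + B2) A = 0" by (rule dsum[OF assms(2,3,1,5,6)])
  have n: "0 \<le> B1 + B2" using assms(2,3) by (rule add_nonneg_nonneg)
  show ?thesis by (rule dsum[OF n assms(4,1) i assms(7)])
qed

lemma disj9: fixes A1 A2 A3 B1 B2 B3 :: "'a::vector_lattice"
  assumes "0 \<le> A1" "0 \<le> A2" "0 \<le> A3" "0 \<le> B1" "0 \<le> B2" "0 \<le> B3"
    and "inf B1 A1 = 0" "inf B2 A1 = 0" "inf B3 A1 = 0"
    and "inf B1 A2 = 0" "inf B2 A2 = 0" "inf B3 A2 = 0"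
    and "inf B1 A3 = 0" "inf B2 A3 = 0" "inf B3 A3 = 0"
  shows "inf (A1 + A2 + A3) (B1 + B2 + B3) = 0"
proof -
  have B: "0 \<le> B1 + B2 + B3" using assms by (intro add_nonneg_nonneg)
  have 1: "inf A1 (B1 + B2 + B3) = 0"
    by (subst inf_commute) (rule dsum3[OF assms(1,4,5,6,7,8,9)])
  have 2: "inf A2 (B1 + B2 + B3) = 0"
    by (subst inf_commute) (rule dsum3[OF assms(2,4,5,6,10,11,12)])
  have 3: "inf A3 (B1 + B2 + B3) = 0"
    by (subst inf_commute) (rule dsum3[OF assms(3,4,5,6,13,14,15)])
  show ?thesis by (rule dsum3[OF B assms(1,2,3) 1 2 3])
qed

definition Phi :: "'a::vector_lattice \<Rightarrow> 'a \<Rightarrow> 'a \<Rightarrow> real \<Rightarrow> real \<Rightarrow> real \<Rightarrow> 'a" where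
  "Phi p q r a b c = a *\<^sub>R p + b *\<^sub>R q + c *\<^sub>R r"

lemma Phi_add: "Phi p q r a b c + Phi p q r a' b' c' = Phi p q r (a + a') (b + b') (c + c')"
  unfolding Phi_def by (simp add: algebra_simps)
lemma Phi_diff: "Phi p q r a b c - Phi p q r a' b' c' = Phi p q r (a - a') (b - b') (c - c')"
  unfolding Phi_def by (simp add: algebra_simps)
lemma Phi_zero: "Phi p q r 0 0 0 = 0"
  unfolding Phi_def by simp

lemma same_disj: fixes p :: "'a::vector_lattice" assumes "0 \<le> p"
  shows "inf (max (- a) 0 *\<^sub>R p) (max a 0 *\<^sub>R p) = 0"
proof -
  have n1: "0 \<le> max (- a) 0 *\<^sub>R p" using assms by (intro scaleR_nonneg_nonneg) auto
  have n2: "0 \<le> max a 0 *\<^sub>R p" using assms by (intro scaleR_nonneg_nonneg) auto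
  show ?thesis
  proof (cases "0 \<le> a")
    case True
    hence "max (- a) 0 = 0" by simp
    thus ?thesis by (simp only: scaleR_zero_left) (rule inf_absorb1[OF n2])
  next
    case False
    hence "max a 0 = 0" by simp
    thus ?thesis by (simp only: scaleR_zero_left) (rule inf_absorb2[OF n1])
  qed
qed

lemma split_scale: fixes v :: "'a::real_vector" shows "x *\<^sub>R v = max x 0 *\<^sub>R v - max (- x) 0 *\<^sub>R v"
proof -
  have e: "max x 0 - max (- x) 0 = x" by auto
  have "max x 0 *\<^sub>R v - max (- x) 0 *\<^sub>R v = (max x 0 - max (- x) 0) *\<^sub>R v"
    by (simp only: scaleR_diff_left)
  thus ?thesis by (simp only: e)
qed

lemma Phi_pos:
  fixes p q r :: "'a::vector_lattice"
  assumes p: "0 \<le> p" and q: "0 \<le> q" and r: "0 \<le> r"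
    and pq: "inf p q = 0" and pr: "inf p r = 0" and qr: "inf q r = 0"
  shows "sup (Phi p q r a b c) 0 = Phi p q r (max a 0) (max b 0) (max c 0)"
proof -
  have qp: "inf q p = 0" and rp: "inf r p = 0" and rq: "inf r q = 0"
    using pq pr qr by (simp_all add: inf_commute)
  let ?P = "Phi p q r (max a 0) (max b 0) (max c 0)"
  let ?N = "Phi p q r (max (- a) 0) (max (- b) 0) (max (- c) 0)"
  have "?P - ?N = Phi p q r (max a 0 - max (- a) 0) (max b 0 - max (- b) 0) (max c 0 - max (- c) 0)"
    by (rule Phi_diff)
  also have "\<dots> = Phi p q r a b c" by (rule arg_cong3[where f = "Phi p q r"]) auto
  finally have e: "Phi p q r a b c = ?P - ?N" by simp
  have sd: "inf (s *\<^sub>R u) (t *\<^sub>R v) = 0" if "inf u v = 0" "0 \<le> u" "0 \<le> v" "0 \<le> s" "0 \<le> t"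
    for u v :: 'a and s t :: real
    using scale_disj that by blast
  have d: "inf ?P ?N = 0"
    unfolding Phi_def
    apply (rule disj9)
    using p q r pq pr qr qp rp rq
    by (auto intro!: scaleR_nonneg_nonneg sd same_disj)
  show ?thesis unfolding e by (rule PN_pos[OF d])
qed

lemma Phi_sup:
  fixes p q r :: "'a::vector_lattice"
  assumes p: "0 \<le> p" and q: "0 \<le> q" and r: "0 \<le> r"
    and pq: "inf p q = 0" and pr: "inf p r = 0" and qr: "inf q r = 0"
  shows "sup (Phi p q r a b c) (Phi p q r a' b' c') = Phi p q r (max a a') (max b b') (max c c')"
proof -
  have "sup (Phi p q r a b c) (Phi p q r a' b' c') =
      Phi p q r a' b' c' + sup (Phi p q r a b c - Phi p q r a' b' c') 0" by (rule sup_via_pos)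
  also have "\<dots> = Phi p q r a' b' c' + Phi p q r (max (a - a') 0) (max (b - b') 0) (max (c - c') 0)"
    unfolding Phi_diff Phi_pos[OF assms] ..
  also have "\<dots> = Phi p q r (max a a') (max b b') (max c c')"
    unfolding Phi_add by (rule arg_cong3[where f = "Phi p q r"]) auto
  finally show ?thesis .
qed

lemma Phi_inf:
  fixes p q r :: "'a::vector_lattice"
  assumes p: "0 \<le> p" and q: "0 \<le> q" and r: "0 \<le> r"
    and pq: "inf p q = 0" and pr: "inf p r = 0" and qr: "inf q r = 0"
  shows "inf (Phi p q r a b c) (Phi p q r a' b' c') = Phi p q r (min a a') (min b b') (min c c')"
proof -
  have "inf (Phi p q r a b c) (Phi p q r a' b' c') =
      Phi p q r a b c - sup (Phi p q r a b c - Phi p q r a' b' c') 0" by (rule inf_via_pos)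
  also have "\<dots> = Phi p q r a b c - Phi p q r (max (a - a') 0) (max (b - b') 0) (max (c - c') 0)"
    unfolding Phi_diff Phi_pos[OF assms] ..
  also have "\<dots> = Phi p q r (min a a') (min b b') (min c c')"
    unfolding Phi_diff by (rule arg_cong3[where f = "Phi p q r"]) auto
  finally show ?thesis .
qed

lemma Phi_G:
  fixes p q r :: "'a::vector_lattice"
  assumes p: "0 \<le> p" and q: "0 \<le> q" and r: "0 \<le> r"
    and pq: "inf p q = 0" and pr: "inf p r = 0" and qr: "inf q r = 0"
  shows "G (Phi p q r a b c) (Phi p q r a' b' c') = Phi p q r (Gr a a') (Gr b b') (Gr c c')"
  unfolding G_def Gr_def Phi_zero[symmetric, of p q r] Phi_sup[OF assms] Phi_inf[OF assms] Phi_add ..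

lemma f_Phi: "linear f \<Longrightarrow> f (Phi p q r a b c) = a * f p + b * f q + (c * f r :: real)"
  unfolding Phi_def by (simp add: lin_add lin_scale)

lemma NC:
  fixes f :: "'a::vector_lattice \<Rightarrow> real"
  assumes lin: "linear f"
    and p: "0 \<le> p" and q: "0 \<le> q" and r: "0 \<le> r"
    and pq: "inf p q = 0" and pr: "inf p r = 0" and qr: "inf q r = 0"
    and fp: "f p \<noteq> 0" and fq: "f q \<noteq> 0" and fr: "f r \<noteq> 0"
  shows "\<not> Cf f"
proof
  assume C: "Cf f"
  define x where "x = Phi p q r (1 / f p) (- 1 / f q) 0"
  define y where "y = Phi p q r (1 / f p) 0 (- 1 / f r)"
  have fx: "f x = 0" unfolding x_def f_Phi[OF lin] using fp fq by simp
  have fy: "f y = 0" unfolding y_def f_Phi[OF lin] using fp fr by simp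
  have "G x y = Phi p q r (Gr (1 / f p) (1 / f p)) (Gr (- 1 / f q) 0) (Gr 0 (- 1 / f r))"
    unfolding x_def y_def by (rule Phi_G[OF p q r pq pr qr])
  also have "\<dots> = Phi p q r (1 / f p) (- 1 / f q) (- 1 / f r)"
    by (rule arg_cong3[where f = "Phi p q r"]) (auto simp: Gr_def)
  finally have g: "G x y = Phi p q r (1 / f p) (- 1 / f q) (- 1 / f r)" .
  have "f (G x y) = -1" unfolding g f_Phi[OF lin] using fp fq fr by simp
  moreover have "f (G x y) = 0" using C fx fy unfolding Cf_def by blast
  ultimately show False by simp
qed



lemma PP:
  fixes \<phi> :: "'a::vector_lattice \<Rightarrow> real"
  assumes lin: "linear \<phi>" and pos: "\<And>x. 0 \<le> x \<Longrightarrow> 0 \<le> \<phi> x"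
    and at: "\<And>a b. 0 \<le> a \<Longrightarrow> 0 \<le> b \<Longrightarrow> inf a b = 0 \<Longrightarrow> \<phi> a = 0 \<or> \<phi> b = 0"
  shows "\<phi> (sup z 0) = max (\<phi> z) 0"
proof -
  have d: "\<phi> z = \<phi> (sup z 0) - \<phi> (sup (- z) 0)"
    using lin_diff[OF lin, of "sup z 0" "sup (- z) 0"] pos_neg_decomp[of z] by simp
  have "\<phi> (sup z 0) = 0 \<or> \<phi> (sup (- z) 0) = 0" by (rule at) (auto intro: pos_neg_disj)
  moreover have "0 \<le> \<phi> (sup z 0)" "0 \<le> \<phi> (sup (- z) 0)" by (auto intro: pos)
  ultimately show ?thesis using d by auto
qed

lemma LH:
  fixes \<phi> g :: "'a::vector_lattice \<Rightarrow> real"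
  assumes l: "linear \<phi>" and lg: "linear g" and p: "\<phi> p \<noteq> 0"
    and null: "\<And>w. \<phi> w = 0 \<Longrightarrow> g w = 0"
  shows "g z = (g p / \<phi> p) * \<phi> z"
proof -
  define w where "w = z - (\<phi> z / \<phi> p) *\<^sub>R p"
  have "\<phi> w = 0" unfolding w_def using p by (simp add: lin_diff[OF l] lin_scale[OF l])
  hence "g w = 0" by (rule null)
  hence "g z = (\<phi> z / \<phi> p) * g p" unfolding w_def by (simp add: lin_diff[OF lg] lin_scale[OF lg])
  thus ?thesis by simp
qed

lemma NullTrans:
  fixes \<phi> g :: "'a::vector_lattice \<Rightarrow> real"
  assumes l: "linear \<phi>" and lg: "linear g" and pp: "\<And>z. \<phi> (sup z 0) = max (\<phi> z) 0"
    and le: "\<And>x. 0 \<le> x \<Longrightarrow> \<bar>g x\<bar> \<le> \<phi> x" and w: "\<phi> w = 0"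
  shows "g w = 0"
proof -
  have "\<phi> (sup w 0) = 0" using pp w by simp
  moreover have "\<phi> (sup (- w) 0) = 0" using pp[of "- w"] w lin_neg[OF l] by simp
  ultimately have "g (sup w 0) = 0" "g (sup (- w) 0) = 0"
    using le[of "sup w 0"] le[of "sup (- w) 0"] by auto
  moreover have "g w = g (sup w 0) - g (sup (- w) 0)"
    using lin_diff[OF lg, of "sup w 0" "sup (- w) 0"] pos_neg_decomp[of w] by simp
  ultimately show ?thesis by simp
qed

lemma nonneg_diff: "(a::'a::ordered_ab_group_add) \<le> b \<Longrightarrow> 0 \<le> b - a"
  by simp

locale tw =
  fixes m :: "'a::vector_lattice \<Rightarrow> real" and p q :: 'a
  assumes lm: "linear m"
    and mpos: "\<And>x. 0 \<le> x \<Longrightarrow> 0 \<le> m x"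
    and S: "\<And>a b c. 0 \<le> a \<Longrightarrow> 0 \<le> b \<Longrightarrow> 0 \<le> c \<Longrightarrow> inf a b = 0 \<Longrightarrow> inf a c = 0 \<Longrightarrow> inf b c = 0
              \<Longrightarrow> m a = 0 \<or> m b = 0 \<or> m c = 0"
    and p0: "0 \<le> p" and q0: "0 \<le> q" and pq: "inf p q = 0"
    and mp: "0 < m p" and mq: "0 < m q"
begin

lemma m_mono: "a \<le> b \<Longrightarrow> m a \<le> m b"
  using mpos[of "b - a"] lin_diff[OF lm, of b a] by simp

definition Rk :: "'a \<Rightarrow> real \<Rightarrow> 'a" where
  "Rk z k = sup (z - k *\<^sub>R (p + q)) 0"

lemma exK:
  assumes z: "0 \<le> z" shows "\<exists>k. 0 \<le> k \<and> m (Rk z k) = 0"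
proof -
  define k where "k = m z / m p + m z / m q + 1"
  have mz: "0 \<le> m z" using mpos z by simp
  have k1: "m z / m p \<le> k - 1" "m z / m q \<le> k - 1" unfolding k_def using mz mp mq by auto
  have "0 \<le> m z / m p" "0 \<le> m z / m q" using mz mp mq by simp_all
  hence k0: "0 < k" unfolding k_def by linarith
  define A where "A = sup (k *\<^sub>R p - z) 0"
  define B where "B = sup (k *\<^sub>R q - z) 0"
  define C where "C = sup (z - k *\<^sub>R (p + q)) 0"
  have kpq: "k *\<^sub>R p \<le> k *\<^sub>R (p + q)" "k *\<^sub>R q \<le> k *\<^sub>R (p + q)"
    using k0 p0 q0 by (auto intro!: scaleR_left_mono)
  have AC: "inf A C = 0" unfolding A_def C_def by (rule disj_far[OF kpq(1)])
  have BC: "inf B C = 0" unfolding B_def C_def by (rule disj_far[OF kpq(2)])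
  have kp0: "0 \<le> k *\<^sub>R p" and kq0: "0 \<le> k *\<^sub>R q" using k0 p0 q0 by (auto intro: scaleR_nonneg_nonneg)
  have Akp: "A \<le> k *\<^sub>R p" unfolding A_def using z kp0 by (auto intro: sup_least)
  have Bkq: "B \<le> k *\<^sub>R q" unfolding B_def using z kq0 by (auto intro: sup_least)
  have kpkq: "inf (k *\<^sub>R p) (k *\<^sub>R q) = 0" using k0 by (intro scale_disj pq p0 q0) auto
  have A0: "0 \<le> A" and B0: "0 \<le> B" and C0: "0 \<le> C" unfolding A_def B_def C_def by auto
  have AB: "inf A B = 0" by (rule disj_mono[OF kpkq A0 Akp B0 Bkq])
  have "m A \<ge> m (k *\<^sub>R p - z)" unfolding A_def by (rule m_mono) simp
  also have "m (k *\<^sub>R p - z) = k * m p - m z" by (simp add: lin_diff[OF lm] lin_scale[OF lm])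
  finally have "m A > 0"
  proof -
    have "m z \<le> (k - 1) * m p" using k1(1) mp by (simp add: divide_le_eq)
    thus "k * m p - m z \<le> m A \<Longrightarrow> 0 < m A" using mp by (simp add: algebra_simps)
  qed
  moreover have "m B > 0"
  proof -
    have "m B \<ge> m (k *\<^sub>R q - z)" unfolding B_def by (rule m_mono) simp
    also have "m (k *\<^sub>R q - z) = k * m q - m z" by (simp add: lin_diff[OF lm] lin_scale[OF lm])
    finally have "k * m q - m z \<le> m B" .
    moreover have "m z \<le> (k - 1) * m q" using k1(2) mq by (simp add: divide_le_eq)
    ultimately show ?thesis using mq by (simp add: algebra_simps)
  qed
  ultimately have "m C = 0" using S[OF A0 B0 C0 AB AC BC] by auto
  thus ?thesis using k0 unfolding C_def Rk_def by (intro exI[of _ k]) auto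
qed

definition K :: "'a \<Rightarrow> real" where
  "K z = (SOME k. 0 \<le> k \<and> m (Rk z k) = 0)"

lemma K_prop: "0 \<le> z \<Longrightarrow> 0 \<le> K z \<and> m (Rk z (K z)) = 0"
  unfolding K_def by (rule someI_ex) (rule exK)

lemma Rk_big: assumes z: "0 \<le> z" and k: "K z \<le> k" shows "m (Rk z k) = 0"
proof -
  have K: "0 \<le> K z" "m (Rk z (K z)) = 0" using K_prop[OF z] by auto
  have "K z *\<^sub>R (p + q) \<le> k *\<^sub>R (p + q)" using k p0 q0 by (intro scaleR_right_mono) auto
  hence "Rk z k \<le> Rk z (K z)" unfolding Rk_def by (intro sup_mono diff_left_mono) auto
  hence "m (Rk z k) \<le> 0" using m_mono K by fastforce
  moreover have "0 \<le> m (Rk z k)" unfolding Rk_def by (rule mpos) simp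
  ultimately show ?thesis by simp
qed

lemma decomp:
  assumes z: "0 \<le> z" and k: "0 \<le> k"
  shows "z = inf z (k *\<^sub>R p) + inf z (k *\<^sub>R q) + Rk z k"
proof -
  have kp0: "0 \<le> k *\<^sub>R p" and kq0: "0 \<le> k *\<^sub>R q" using k p0 q0 by (auto intro: scaleR_nonneg_nonneg)
  have kpkq: "inf (k *\<^sub>R p) (k *\<^sub>R q) = 0" using k by (intro scale_disj pq p0 q0) auto
  have "z = inf z (k *\<^sub>R (p + q)) + sup (z - k *\<^sub>R (p + q)) 0" by (rule trunc_rest)
  also have "inf z (k *\<^sub>R (p + q)) = inf z (k *\<^sub>R p + k *\<^sub>R q)" by (simp only: scaleR_add_right)
  also have "\<dots> = inf z (k *\<^sub>R p) + inf z (k *\<^sub>R q)" by (rule inf_disj_add[OF z kp0 kq0 kpkq])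
  finally show ?thesis unfolding Rk_def .
qed

lemma null_lin:
  assumes lg: "linear g" and gle: "\<And>x. 0 \<le> x \<Longrightarrow> \<bar>g x\<bar> \<le> m x"
    and d: "0 \<le> d" "m d = 0"
  shows "g d = 0"
  using gle[OF d(1)] d(2) by simp

lemma msplit:
  assumes lg: "linear g" and z: "0 \<le> z" and k: "K z \<le> k"
    and gle: "\<And>x. 0 \<le> x \<Longrightarrow> \<bar>g x\<bar> \<le> m x"
  shows "g z = g (inf z (k *\<^sub>R p)) + g (inf z (k *\<^sub>R q))"
proof -
  have k0: "0 \<le> k" using K_prop[OF z] k by linarith
  have "g (Rk z k) = 0" using Rk_big[OF z k] by (intro null_lin[OF lg gle]) (auto simp: Rk_def)
  moreover have "g z = g (inf z (k *\<^sub>R p)) + g (inf z (k *\<^sub>R q)) + g (Rk z k)"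
    by (subst decomp[OF z k0]) (simp add: lin_add[OF lg])
  ultimately show ?thesis by simp
qed

lemma m_le_self: "0 \<le> x \<Longrightarrow> \<bar>m x\<bar> \<le> m x"
  using mpos by simp

lemma inf_kmono:
  fixes u z :: 'a
  assumes "0 \<le> u" "k \<le> k'" shows "inf z (k *\<^sub>R u) \<le> inf z (k' *\<^sub>R u)"
  by (rule inf_mono[OF order.refl scaleR_right_mono[OF assms(2,1)]])

lemma m_stab:
  assumes z: "0 \<le> z" and k: "K z \<le> k"
  shows "m (inf z (k *\<^sub>R p)) = m (inf z (K z *\<^sub>R p))"
proof -
  have K0: "K z \<le> K z" by simp
  have e1: "m z = m (inf z (k *\<^sub>R p)) + m (inf z (k *\<^sub>R q))" by (rule msplit[OF lm z k m_le_self])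
  have e2: "m z = m (inf z (K z *\<^sub>R p)) + m (inf z (K z *\<^sub>R q))" by (rule msplit[OF lm z K0 m_le_self])
  have "m (inf z (K z *\<^sub>R p)) \<le> m (inf z (k *\<^sub>R p))" by (intro m_mono inf_kmono p0 k)
  moreover have "m (inf z (K z *\<^sub>R q)) \<le> m (inf z (k *\<^sub>R q))" by (intro m_mono inf_kmono q0 k)
  ultimately show ?thesis using e1 e2 by linarith
qed

definition T :: "('a \<Rightarrow> real) \<Rightarrow> 'a \<Rightarrow> real" where
  "T g z = g (inf z (K z *\<^sub>R p))"

lemma T_stab:
  assumes lg: "linear g" and gle: "\<And>x. 0 \<le> x \<Longrightarrow> \<bar>g x\<bar> \<le> m x"
    and z: "0 \<le> z" and k: "K z \<le> k"
  shows "g (inf z (k *\<^sub>R p)) = T g z"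
proof -
  define d where "d = inf z (k *\<^sub>R p) - inf z (K z *\<^sub>R p)"
  have d0: "0 \<le> d" unfolding d_def by (rule nonneg_diff[OF inf_kmono[OF p0 k]])
  have "m d = 0" unfolding d_def lin_diff[OF lm] using m_stab[OF z k] by simp
  hence "g d = 0" by (intro null_lin[OF lg gle d0])
  thus ?thesis unfolding d_def T_def lin_diff[OF lg] by simp
qed

lemma T_add:
  assumes lg: "linear g" and gle: "\<And>x. 0 \<le> x \<Longrightarrow> \<bar>g x\<bar> \<le> m x"
    and x: "0 \<le> x" and y: "0 \<le> y"
  shows "T g (x + y) = T g x + T g y"
proof -
  define k where "k = max (K (x + y)) (max (K x) (K y))"
  have xy: "0 \<le> x + y" using x y by simp
  have kxy: "K (x + y) \<le> k" and kx: "K x \<le> k" and ky: "K y \<le> k" unfolding k_def by auto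
  have k0: "0 \<le> k" using K_prop[OF x] kx by linarith
  have kp0: "0 \<le> k *\<^sub>R p" and kq0: "0 \<le> k *\<^sub>R q" using k0 p0 q0 by (auto intro: scaleR_nonneg_nonneg)
  define dp where "dp = inf x (k *\<^sub>R p) + inf y (k *\<^sub>R p) - inf (x + y) (k *\<^sub>R p)"
  define dq where "dq = inf x (k *\<^sub>R q) + inf y (k *\<^sub>R q) - inf (x + y) (k *\<^sub>R q)"
  have dp0: "0 \<le> dp" unfolding dp_def by (rule nonneg_diff[OF inf_subadd[OF x y kp0]])
  have dq0: "0 \<le> dq" unfolding dq_def by (rule nonneg_diff[OF inf_subadd[OF x y kq0]])
  have "m (x + y) = m x + m y" by (rule lin_add[OF lm])
  moreover have "m (x + y) = m (inf (x + y) (k *\<^sub>R p)) + m (inf (x + y) (k *\<^sub>R q))"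
    by (rule msplit[OF lm xy kxy m_le_self])
  moreover have "m x = m (inf x (k *\<^sub>R p)) + m (inf x (k *\<^sub>R q))"
    by (rule msplit[OF lm x kx m_le_self])
  moreover have "m y = m (inf y (k *\<^sub>R p)) + m (inf y (k *\<^sub>R q))"
    by (rule msplit[OF lm y ky m_le_self])
  ultimately have "m dp + m dq = 0" unfolding dp_def dq_def lin_diff[OF lm] lin_add[OF lm] by simp
  moreover have "0 \<le> m dp" "0 \<le> m dq" using dp0 dq0 mpos by auto
  ultimately have "m dp = 0" by linarith
  hence "g dp = 0" by (intro null_lin[OF lg gle dp0])
  hence "g (inf (x + y) (k *\<^sub>R p)) = g (inf x (k *\<^sub>R p)) + g (inf y (k *\<^sub>R p))"
    unfolding dp_def lin_diff[OF lg] lin_add[OF lg] by simp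
  thus ?thesis using T_stab[OF lg gle xy kxy] T_stab[OF lg gle x kx] T_stab[OF lg gle y ky] by simp
qed

lemma T_hom:
  assumes lg: "linear g" and gle: "\<And>x. 0 \<le> x \<Longrightarrow> \<bar>g x\<bar> \<le> m x"
    and c: "0 \<le> c" and x: "0 \<le> x"
  shows "T g (c *\<^sub>R x) = c * T g x"
proof (cases "c = 0")
  case True
  have "0 \<le> K 0" using K_prop[of 0] by simp
  hence "0 \<le> K 0 *\<^sub>R p" using p0 by (simp add: scaleR_nonneg_nonneg)
  hence "inf 0 (K 0 *\<^sub>R p) = 0" by (simp add: inf_absorb1)
  thus ?thesis using True unfolding T_def by (simp add: lin_0[OF lg])
next
  case False
  hence c0: "0 < c" using c by simp
  have cx: "0 \<le> c *\<^sub>R x" using c x by (simp add: scaleR_nonneg_nonneg)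
  define k where "k = max (K (c *\<^sub>R x)) (c * K x)"
  have k1: "K (c *\<^sub>R x) \<le> k" unfolding k_def by simp
  have "c * K x \<le> k" unfolding k_def by simp
  hence k2: "K x \<le> k / c" using c0 by (simp add: le_divide_eq mult.commute)
  have "inf (c *\<^sub>R x) (k *\<^sub>R p) = c *\<^sub>R inf x ((k / c) *\<^sub>R p)"
    using c0 by (simp add: scale_inf)
  hence "T g (c *\<^sub>R x) = c * g (inf x ((k / c) *\<^sub>R p))"
    using T_stab[OF lg gle cx k1] by (simp add: lin_scale[OF lg])
  also have "g (inf x ((k / c) *\<^sub>R p)) = T g x" by (rule T_stab[OF lg gle x k2])
  finally show ?thesis .
qed

lemma T_nonneg: "0 \<le> x \<Longrightarrow> 0 \<le> T m x"
  unfolding T_def using K_prop[of x] p0 by (intro mpos) (auto intro: scaleR_nonneg_nonneg)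

lemma T_le: assumes gle: "\<And>x. 0 \<le> x \<Longrightarrow> \<bar>g x\<bar> \<le> m x" and x: "0 \<le> x"
  shows "\<bar>T g x\<bar> \<le> T m x"
  unfolding T_def using K_prop[of x] p0 x by (intro gle) (auto intro: scaleR_nonneg_nonneg)

lemma T_atom:
  assumes a: "0 \<le> a" and b: "0 \<le> b" and ab: "inf a b = 0"
  shows "T m a = 0 \<or> T m b = 0"
proof -
  define k where "k = max 1 (max (K a) (K b))"
  have ka: "K a \<le> k" and kb: "K b \<le> k" and k1: "1 \<le> k" unfolding k_def by auto
  have kp0: "0 \<le> k *\<^sub>R p" using k1 p0 by (simp add: scaleR_nonneg_nonneg)
  have A0: "0 \<le> inf a (k *\<^sub>R p)" and B0: "0 \<le> inf b (k *\<^sub>R p)" using a b kp0 by auto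
  have AB: "inf (inf a (k *\<^sub>R p)) (inf b (k *\<^sub>R p)) = 0"
    by (rule disj_mono[OF ab A0 inf.cobounded1 B0 inf.cobounded1])
  have kpq: "inf (k *\<^sub>R p) (1 *\<^sub>R q) = 0" using k1 by (intro scale_disj pq p0 q0) auto
  hence kpq': "inf (k *\<^sub>R p) q = 0" by simp
  have AC: "inf (inf a (k *\<^sub>R p)) q = 0" by (rule disj_mono[OF kpq' A0 inf.cobounded2 q0 order.refl])
  have BC: "inf (inf b (k *\<^sub>R p)) q = 0" by (rule disj_mono[OF kpq' B0 inf.cobounded2 q0 order.refl])
  have "m (inf a (k *\<^sub>R p)) = 0 \<or> m (inf b (k *\<^sub>R p)) = 0 \<or> m q = 0"
    by (rule S[OF A0 B0 q0 AB AC BC])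
  thus ?thesis using mq T_stab[OF lm m_le_self a ka] T_stab[OF lm m_le_self b kb] by auto
qed

definition phi :: "'a \<Rightarrow> real" where "phi = cext (T m)"

lemma phi_linear: "linear phi"
  unfolding phi_def by (intro cext_linear T_add T_hom lm m_le_self) auto

lemma phi_cone: "0 \<le> x \<Longrightarrow> phi x = T m x"
  unfolding phi_def by (intro cext_pos T_add lm m_le_self) auto

lemma phi_pp: "phi (sup z 0) = max (phi z) 0"
  by (rule PP[OF phi_linear]) (auto simp: phi_cone T_nonneg T_atom)

lemma phi_p: "0 < phi p"
proof -
  define k where "k = max 1 (K p)"
  have k: "K p \<le> k" "1 \<le> k" unfolding k_def by auto
  have "p \<le> k *\<^sub>R p" using k(2) p0 scaleR_right_mono[OF k(2) p0] by simp
  hence "inf p (k *\<^sub>R p) = p" by (simp add: inf_absorb1)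
  thus ?thesis using T_stab[OF lm m_le_self p0 k(1)] phi_cone[OF p0] mp by simp
qed

definition psi :: "('a \<Rightarrow> real) \<Rightarrow> 'a \<Rightarrow> real" where "psi g = cext (T g)"

lemma psi_linear: "linear g \<Longrightarrow> (\<And>x. 0 \<le> x \<Longrightarrow> \<bar>g x\<bar> \<le> m x) \<Longrightarrow> linear (psi g)"
  unfolding psi_def by (intro cext_linear T_add T_hom) auto

lemma psi_cone: "linear g \<Longrightarrow> (\<And>x. 0 \<le> x \<Longrightarrow> \<bar>g x\<bar> \<le> m x) \<Longrightarrow> 0 \<le> x \<Longrightarrow> psi g x = T g x"
  unfolding psi_def by (intro cext_pos T_add) auto

lemma psi_eq:
  assumes lg: "linear g" and gle: "\<And>x. 0 \<le> x \<Longrightarrow> \<bar>g x\<bar> \<le> m x"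
  shows "psi g z = (psi g p / phi p) * phi z"
proof (rule LH[OF phi_linear psi_linear[OF lg gle]])
  show "phi p \<noteq> 0" using phi_p by simp
  fix w assume "phi w = 0"
  thus "psi g w = 0"
    by (intro NullTrans[OF phi_linear psi_linear[OF lg gle] phi_pp])
       (auto simp: psi_cone[OF lg gle] phi_cone T_le[OF gle])
qed

end



lemma lin_comb:
  fixes \<phi>1 \<phi>2 :: "'a::vector_lattice \<Rightarrow> real"
  assumes "linear \<phi>1" "linear \<phi>2"
  shows "linear (\<lambda>z. c1 * \<phi>1 z + c2 * \<phi>2 z)"
  by (rule linearI) (simp_all add: lin_add[OF assms(1)] lin_add[OF assms(2)]
      lin_scale[OF assms(1)] lin_scale[OF assms(2)] algebra_simps)

lemma SL:
  fixes m f :: "'a::vector_lattice \<Rightarrow> real"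
  assumes lm: "linear m" and lf: "linear f"
    and mpos: "\<And>x. 0 \<le> x \<Longrightarrow> 0 \<le> m x"
    and fle: "\<And>x. 0 \<le> x \<Longrightarrow> \<bar>f x\<bar> \<le> m x"
    and S: "\<And>a b c. 0 \<le> a \<Longrightarrow> 0 \<le> b \<Longrightarrow> 0 \<le> c \<Longrightarrow> inf a b = 0 \<Longrightarrow> inf a c = 0 \<Longrightarrow> inf b c = 0
              \<Longrightarrow> m a = 0 \<or> m b = 0 \<or> m c = 0"
  shows "Cf f"
proof (cases "\<exists>p q. 0 \<le> p \<and> 0 \<le> q \<and> inf p q = 0 \<and> 0 < m p \<and> 0 < m q")
  case True
  then obtain p q where p0: "0 \<le> p" and q0: "0 \<le> q" and pq: "inf p q = 0"
    and mp: "0 < m p" and mq: "0 < m q" by blast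
  have qp: "inf q p = 0" using pq by (simp add: inf_commute)
  interpret A: tw m p q by (rule tw.intro[OF lm mpos S p0 q0 pq mp mq])
  interpret B: tw m q p by (rule tw.intro[OF lm mpos S q0 p0 qp mq mp])
  define c1 where "c1 = A.psi f p / A.phi p"
  define c2 where "c2 = B.psi f q / B.phi q"
  have cone: "f x = c1 * A.phi x + c2 * B.phi x" if x: "0 \<le> x" for x
  proof -
    define k where "k = max (A.K x) (B.K x)"
    have ka: "A.K x \<le> k" and kb: "B.K x \<le> k" unfolding k_def by auto
    have "f x = f (inf x (k *\<^sub>R p)) + f (inf x (k *\<^sub>R q))" by (rule A.msplit[OF lf x ka fle])
    also have "f (inf x (k *\<^sub>R p)) = A.T f x" by (rule A.T_stab[OF lf fle x ka])
    also have "f (inf x (k *\<^sub>R q)) = B.T f x" by (rule B.T_stab[OF lf fle x kb])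
    also have "A.T f x = A.psi f x" by (rule A.psi_cone[OF lf fle x, symmetric])
    also have "B.T f x = B.psi f x" by (rule B.psi_cone[OF lf fle x, symmetric])
    also have "A.psi f x = c1 * A.phi x" unfolding c1_def by (rule A.psi_eq[OF lf fle])
    also have "B.psi f x = c2 * B.phi x" unfolding c2_def by (rule B.psi_eq[OF lf fle])
    finally show ?thesis .
  qed
  have all: "f z = c1 * A.phi z + c2 * B.phi z" for z
    by (rule lin_eq_cone[OF lf lin_comb[OF A.phi_linear B.phi_linear] cone])
  show ?thesis by (rule GL[OF A.phi_linear B.phi_linear A.phi_pp B.phi_pp all])
next
  case False
  have at: "m a = 0 \<or> m b = 0" if "0 \<le> a" "0 \<le> b" "inf a b = 0" for a b
  proof -
    have "\<not> (0 < m a \<and> 0 < m b)" using False that by blast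
    thus ?thesis using mpos[OF that(1)] mpos[OF that(2)] by linarith
  qed
  have pp: "m (sup z 0) = max (m z) 0" for z by (rule PP[OF lm mpos at])
  show ?thesis
  proof (cases "\<exists>p. 0 \<le> p \<and> 0 < m p")
    case True
    then obtain p where p: "0 \<le> p" "0 < m p" by blast
    have null: "f w = 0" if "m w = 0" for w by (rule NullTrans[OF lm lf pp fle that])
    have mp0: "m p \<noteq> 0" using p by simp
    have e: "f z = (f p / m p) * m z" for z by (rule LH[OF lm lf mp0 null])
    have all: "f z = (f p / m p) * m z + 0 * m z" for z using e[of z] by simp
    show ?thesis by (rule GL[OF lm lm pp pp all])
  next
    case False
    have cone: "f x = 0 * m x + 0 * m x" if "0 \<le> x" for x
    proof -
      have "\<not> 0 < m x" using False that by blast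
      hence "m x = 0" using mpos[OF that] by linarith
      hence "f x = 0" using fle[OF that] by simp
      thus ?thesis by simp
    qed
    have all: "f z = 0 * m z + 0 * m z" for z
      by (rule lin_eq_cone[OF lf lin_comb[OF lm lm] cone])
    show ?thesis by (rule GL[OF lm lm pp pp all])
  qed
qed

theorem lemma3:
  fixes l :: "'a::vector_lattice \<Rightarrow> real"
  assumes "order_bounded_functional l"
  shows "grothendieck_subspace (kernel l) \<longleftrightarrow> grothendieck_subspace (kernel (functional_modulus l))"
proof -
  note ob = assms
  have ll: "linear l" using ob unfolding order_bounded_functional_def by simp
  define m where "m = RKM l"
  have fm: "functional_modulus l = m" unfolding m_def by (rule functional_modulus_eq[OF ob])
  have lm: "linear m" unfolding m_def by (rule RKM_linear[OF ob])
  have mpos: "\<And>x. 0 \<le> x \<Longrightarrow> 0 \<le> m x" unfolding m_def by (rule RKM_nonneg[OF ob])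
  have lle: "\<bar>l x\<bar> \<le> m x" if "0 \<le> x" for x
    using RKM_ge[OF ob that] unfolding m_def by linarith
  have mle: "\<bar>m x\<bar> \<le> m x" if "0 \<le> x" for x using mpos[OF that] by simp
  define Sm where "Sm \<longleftrightarrow> (\<forall>a b c. 0 \<le> a \<longrightarrow> 0 \<le> b \<longrightarrow> 0 \<le> c \<longrightarrow> inf a b = 0 \<longrightarrow> inf a c = 0 \<longrightarrow> inf b c = 0
              \<longrightarrow> m a = 0 \<or> m b = 0 \<or> m c = 0)"
  have SmC: "Cf f" if "Sm" and lf: "linear f" and fle: "\<And>x. 0 \<le> x \<Longrightarrow> \<bar>f x\<bar> \<le> m x" for f
    by (rule SL[OF lm lf mpos fle]) (use \<open>Sm\<close> in \<open>auto simp: Sm_def\<close>)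
  have Cl: "Sm" if C: "Cf l"
  proof (rule ccontr)
    assume "\<not> Sm"
    then obtain a b c where a: "0 \<le> a" and b: "0 \<le> b" and c: "0 \<le> c"
      and ab: "inf a b = 0" and ac: "inf a c = 0" and bc: "inf b c = 0"
      and ma: "m a \<noteq> 0" and mb: "m b \<noteq> 0" and mc: "m c \<noteq> 0" unfolding Sm_def by blast
    have "0 < RKM l a" using ma mpos[OF a] unfolding m_def by simp
    then obtain a' where a': "0 \<le> a'" "a' \<le> a" "l a' \<noteq> 0" using RKM_witness[OF ob a] by blast
    have "0 < RKM l b" using mb mpos[OF b] unfolding m_def by simp
    then obtain b' where b': "0 \<le> b'" "b' \<le> b" "l b' \<noteq> 0" using RKM_witness[OF ob b] by blast
    have "0 < RKM l c" using mc mpos[OF c] unfolding m_def by simp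
    then obtain c' where c': "0 \<le> c'" "c' \<le> c" "l c' \<noteq> 0" using RKM_witness[OF ob c] by blast
    have "inf a' b' = 0" by (rule disj_mono[OF ab a'(1,2) b'(1,2)])
    moreover have "inf a' c' = 0" by (rule disj_mono[OF ac a'(1,2) c'(1,2)])
    moreover have "inf b' c' = 0" by (rule disj_mono[OF bc b'(1,2) c'(1,2)])
    ultimately have "\<not> Cf l" using NC[OF ll a'(1) b'(1) c'(1)] a'(3) b'(3) c'(3) by blast
    thus False using C by simp
  qed
  have Cm: "Sm" if C: "Cf m"
  proof (rule ccontr)
    assume "\<not> Sm"
    then obtain a b c where a: "0 \<le> a" and b: "0 \<le> b" and c: "0 \<le> c"
      and ab: "inf a b = 0" and ac: "inf a c = 0" and bc: "inf b c = 0"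
      and ma: "m a \<noteq> 0" and mb: "m b \<noteq> 0" and mc: "m c \<noteq> 0" unfolding Sm_def by blast
    have "\<not> Cf m" by (rule NC[OF lm a b c ab ac bc ma mb mc])
    thus False using C by simp
  qed
  show ?thesis unfolding fm gs_iff[OF ll] gs_iff[OF lm]
    using Cl Cm SmC[OF _ ll lle] SmC[OF _ lm mle] by blast
qed


end
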